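(* Let $R:\mathbb{R}_{\geq0}\to SO(3)$, $p:\mathbb{R}_{\geq0}\to\mathbb{R}^3$ describe a rigid-body motion with $\dot R=R\omega^\times$, where $\omega$ is continuous and bounded, and let $g=[g_1,g_2,g_3]^\top$ be the (constant, nonzero) gravity vector. Let $p_1,\dots,p_N\in\mathbb{R}^3$ ($N\geq3$), $p_i=[p_{i1},p_{i2},p_{i3}]^\top$, be constant landmark positions, and let a stereo camera pair have fixed extrinsics $(R_{c1},p_{c1}),(R_{c2},p_{c2})\in SO(3)\times\mathbb{R}^3$, with bearing measurements $y_i^s=\frac{R_{cs}^\top(R^\top(p_i-p)-p_{cs})}{\|R^\top(p_i-p)-p_{cs}\|}$, $s=1,2$. Set $\Pi_i(t)=\pi(R_{c1}y_i^1(t))+\pi(R_{c2}y_i^2(t))$ and assume each $\Pi_i(t)$ is continuous, bounded and uniformly positive definite. Define $A(t)$ by $$A(t)=\begin{bmatrix} -\omega^\times & 0_3 & 0_3 & 0_3 & I_3\\ 0_3 & -\omega^\times & 0_3 & 0_3 & 0_3\\ 0_3&0_3&-\omega^\times&0_3&0_3\\ 0_3&0_3&0_3&-\omega^\times&0_3\\ 0_3& g_1I_3& g_2 I_3& g_3 I_3& -\omega^\times\end{bmatrix}$$ and $C(t)\in\mathbb{R}^{3N\times15}$ whose $i$-th block row is $[\,\Pi_i,\ -p_{i1}\Pi_i,\ -p_{i2}\Pi_i,\ -p_{i3}\Pi_i,\ 0_3\,]$. Suppose that among the $N$ landmarks there are three non-aligned landmarks whose plane is not parallel to the gravity vector $g$.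 Then the pair $(A(t),C(t))$ is uniformly observable.
   Context: $x^\times$ denotes the skew-symmetric matrix with $x^\times y=x\times y$. For a unit vector $x\in\mathbb{S}^2$, $\pi(x)=I_3-xx^\top$. A pair $(A(t),C(t))$ of continuous bounded matrix functions is uniformly observable if there exist $\delta,\mu>0$ such that $\frac1\delta\int_t^{t+\delta}\Phi(\tau,t)^\top C(\tau)^\top C(\tau)\Phi(\tau,t)\,d\tau\geq\mu I$ for all $t\geq0$, where $\Phi$ is the state transition matrix of $A(t)$. *)

theory Defs
  imports "HOL-Analysis.Analysis"
begin

text \<open>Skew-symmetric matrix: skew x *v y = x \<times> y.\<close>
definition skew :: "real^3 \<Rightarrow> real^3^3" where
  "skew x = vector [vector [0, - x$3, x$2], vector [x$3, 0, - x$1], vector [- x$2, x$1, 0]]"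

definition proj :: "real^3 \<Rightarrow> real^3^3" where
  "proj x = mat 1 - (\<chi> i j. x$i * x$j)"

definition SO3 :: "(real^3^3) set" where
  "SO3 = {Q. orthogonal_matrix Q \<and> det Q = 1}"

definition bearing :: "(real \<Rightarrow> real^3^3) \<Rightarrow> (real \<Rightarrow> real^3) \<Rightarrow> real^3^3 \<Rightarrow> real^3 \<Rightarrow> real^3 \<Rightarrow> real \<Rightarrow> real^3" where
  "bearing R p Rc pc l t =
     (transpose Rc *v (transpose (R t) *v (l - p t) - pc)) /\<^sub>R norm (transpose (R t) *v (l - p t) - pc)"

definition PiM :: "(real \<Rightarrow> real^3^3) \<Rightarrow> (real \<Rightarrow> real^3) \<Rightarrow> real^3^3 \<Rightarrow> real^3 \<Rightarrow> real^3^3 \<Rightarrow> real^3 \<Rightarrow> real^3 \<Rightarrow> real \<Rightarrow> real^3^3" where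
  "PiM R p Rc1 pc1 Rc2 pc2 l t =
     proj (Rc1 *v bearing R p Rc1 pc1 l t) + proj (Rc2 *v bearing R p Rc2 pc2 l t)"

text \<open>15-dimensional state indexed by (block, component), blocks 1..5 (literals of type 5).\<close>
definition Ablk :: "real^3 \<Rightarrow> real^3 \<Rightarrow> 5 \<Rightarrow> 5 \<Rightarrow> real^3^3" where
  "Ablk w g b b' =
     (if b = b' then - skew w
      else if b = 1 \<and> b' = 5 then mat 1
      else if b = 5 \<and> b' = 2 then g$1 *\<^sub>R mat 1
      else if b = 5 \<and> b' = 3 then g$2 *\<^sub>R mat 1
      else if b = 5 \<and> b' = 4 then g$3 *\<^sub>R mat 1
      else 0)"

definition Amat :: "(real \<Rightarrow> real^3) \<Rightarrow> real^3 \<Rightarrow> real \<Rightarrow> real^(5 \<times> 3)^(5 \<times> 3)" where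
  "Amat \<omega> g t = (\<chi> u v. Ablk (\<omega> t) g (fst u) (fst v) $ snd u $ snd v)"

definition Cblk :: "real^3^3 \<Rightarrow> real^3 \<Rightarrow> 5 \<Rightarrow> real^3^3" where
  "Cblk P l b' =
     (if b' = 1 then P
      else if b' = 2 then (- l$1) *\<^sub>R P
      else if b' = 3 then (- l$2) *\<^sub>R P
      else if b' = 4 then (- l$3) *\<^sub>R P
      else 0)"

definition Cmat :: "('n::finite \<Rightarrow> real \<Rightarrow> real^3^3) \<Rightarrow> ('n \<Rightarrow> real^3) \<Rightarrow> real \<Rightarrow> real^(5 \<times> 3)^('n \<times> 3)" where
  "Cmat P pl t = (\<chi> u v. Cblk (P (fst u) t) (pl (fst u)) (fst v) $ snd u $ snd v)"

definition is_transition :: "(real \<Rightarrow> real^'m::finite^'m) \<Rightarrow> (real \<Rightarrow> real \<Rightarrow> real^'m^'m) \<Rightarrow> bool" where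
  "is_transition A \<Phi> \<longleftrightarrow> (\<forall>t\<ge>0. \<Phi> t t = mat 1 \<and>
      (\<forall>\<tau>\<ge>t. ((\<lambda>s. \<Phi> s t) has_vector_derivative (A \<tau> ** \<Phi> \<tau> t)) (at \<tau> within {t..})))"

definition uniformly_observable :: "(real \<Rightarrow> real^'m::finite^'m) \<Rightarrow> (real \<Rightarrow> real^'m^'k::finite) \<Rightarrow> bool" where
  "uniformly_observable A C \<longleftrightarrow> (\<exists>\<Phi>. is_transition A \<Phi> \<and>
     (\<exists>\<delta>>0. \<exists>\<mu>>0. \<forall>t\<ge>0. \<forall>x.
        x \<bullet> (((1/\<delta>) *\<^sub>R integral {t..t+\<delta>}
               (\<lambda>\<tau>. transpose (C \<tau> ** \<Phi> \<tau> t) ** (C \<tau> ** \<Phi> \<tau> t))) *v x) \<ge> \<mu> * (x \<bullet> x)))"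

end

theory Submission
  imports Defs
begin

definition blk :: "('a::finite \<Rightarrow> 'b::finite \<Rightarrow> real^3^3) \<Rightarrow> real^('b\<times>3)^('a\<times>3)" where
  "blk F = (\<chi> u v. F (fst u) (fst v) $ snd u $ snd v)"
definition bv :: "real^('a::finite\<times>3) \<Rightarrow> 'a \<Rightarrow> real^3" where
  "bv z a = (\<chi> m. z $ (a, m))"

lemma sum_prod_UNIV: "(\<Sum>v\<in>(UNIV::('a::finite\<times>'b::finite) set). f v) = (\<Sum>a\<in>UNIV. \<Sum>b\<in>UNIV. f (a,b))"
  by (simp add: sum.cartesian_product UNIV_Times_UNIV[symmetric] del: UNIV_Times_UNIV)

lemma bv_blk: "bv (blk F *v z) a = (\<Sum>b\<in>UNIV. F a b *v bv z b)"
  by (simp add: vec_eq_iff bv_def blk_def matrix_vector_mult_def sum_component sum_prod_UNIV)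

lemma bv_eq: "(\<And>a. bv z a = bv w a) \<Longrightarrow> z = w"
  by (simp add: vec_eq_iff bv_def)

lemma bv_simps[simp]: "bv (z + w) a = bv z a + bv w a" "bv (z - w) a = bv z a - bv w a"
  "bv (c *\<^sub>R z) a = c *\<^sub>R bv z a" "bv (- z) a = - bv z a" "bv 0 a = 0"
  "bv (mat 1 *v z) a = bv z a"
  by (simp_all add: vec_eq_iff bv_def)

lemma inner_bv: "z \<bullet> w = (\<Sum>a\<in>UNIV. bv z a \<bullet> bv w a)"
  by (simp add: inner_vec_def bv_def sum_prod_UNIV)

lemma sum5: "(\<Sum>b\<in>(UNIV::5 set). f b) = f 1 + f 2 + f 3 + f 4 + f 5"
proof -
  have "(UNIV::5 set) = {1,2,3,4,5}"
    by (rule sym, rule card_subset_eq) auto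
  show ?thesis unfolding \<open>(UNIV::5 set) = _\<close> by (simp add: algebra_simps)
qed


lemma all5: "(\<forall>a::5. P a) \<longleftrightarrow> P 1 \<and> P 2 \<and> P 3 \<and> P 4 \<and> P 5"
proof -
  have "(UNIV::5 set) = {1,2,3,4,5}"
    by (rule sym, rule card_subset_eq) auto
  then show ?thesis by (metis UNIV_I insert_iff singletonD)
qed

lemma scaleR_mv[simp]: "(c *\<^sub>R M) *v x = c *\<^sub>R (M *v x)" "M *v (c *\<^sub>R x) = c *\<^sub>R (M *v (x::real^_))"
  by (simp_all add: vec_eq_iff matrix_vector_mult_def sum_distrib_left algebra_simps)

lemma mv_distribs[simp]: "M *v (x + y) = M *v x + M *v (y::real^_)" "M *v (x - y) = M *v x - M *v (y::real^_)"
  "M *v (- y) = - (M *v (y::real^_))" "(M + M') *v x = M *v x + M' *v x" "(- M) *v x = - (M *v x)"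
  by (simp_all add: vec_eq_iff matrix_vector_mult_def sum.distrib sum_subtractf algebra_simps sum_negf)

definition Dg :: "real^3^3 \<Rightarrow> real^('a::finite\<times>3)^('a\<times>3)" where
  "Dg M = blk (\<lambda>a b. if a = b then M else 0)"

lemma bv_Dg[simp]: "bv (Dg M *v z) a = M *v bv z a"
  unfolding Dg_def bv_blk by (simp add: if_distrib[of "\<lambda>X. X *v _"] cong: if_cong)

definition Nb :: "real^3 \<Rightarrow> 5 \<Rightarrow> 5 \<Rightarrow> real^3^3" where
  "Nb g b b' =
     (if b = 1 \<and> b' = 5 then mat 1
      else if b = 5 \<and> b' = 2 then g$1 *\<^sub>R mat 1
      else if b = 5 \<and> b' = 3 then g$2 *\<^sub>R mat 1
      else if b = 5 \<and> b' = 4 then g$3 *\<^sub>R mat 1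
      else 0)"

definition Nm :: "real^3 \<Rightarrow> real^(5\<times>3)^(5\<times>3)" where "Nm g = blk (Nb g)"

definition Gs :: "real^3 \<Rightarrow> real^(5\<times>3) \<Rightarrow> real^3" where
  "Gs g z = g$1 *\<^sub>R bv z 2 + g$2 *\<^sub>R bv z 3 + g$3 *\<^sub>R bv z 4"

lemma bv_Nm: "bv (Nm g *v z) a = (if a = 1 then bv z 5 else if a = 5 then Gs g z else 0)"
  unfolding Nm_def bv_blk sum5 Nb_def Gs_def
  by (simp add:)

lemma bv_Nm_simps[simp]: "bv (Nm g *v z) 1 = bv z 5" "bv (Nm g *v z) 5 = Gs g z"
  "bv (Nm g *v z) 2 = 0" "bv (Nm g *v z) 3 = 0" "bv (Nm g *v z) 4 = 0"
  by (simp_all add: bv_Nm)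

lemma Gs_simps[simp]: "Gs g (Nm g *v z) = 0" "Gs g (Dg M *v z) = M *v Gs g z"
  "Gs g (z + w) = Gs g z + Gs g w" "Gs g (c *\<^sub>R z) = c *\<^sub>R Gs g z"
  by (simp_all add: Gs_def matrix_vector_right_distrib algebra_simps)

lemma Nm_Dg_comm: "Nm g ** Dg M = Dg M ** Nm g"
  unfolding matrix_eq matrix_vector_mul_assoc[symmetric]
  by (intro allI bv_eq) (simp add: bv_Nm)

lemma Nm_cube: "Nm g ** Nm g ** Nm g = 0"
  unfolding matrix_eq matrix_vector_mul_assoc[symmetric]
  by (intro allI bv_eq) (simp add: bv_Nm)



definition Em :: "real^3 \<Rightarrow> real \<Rightarrow> real^(5\<times>3)^(5\<times>3)" where
  "Em g s = mat 1 + s *\<^sub>R Nm g + (s^2/2) *\<^sub>R (Nm g ** Nm g)"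

lemma Em_mv: "Em g s *v z = z + s *\<^sub>R (Nm g *v z) + (s^2/2) *\<^sub>R (Nm g *v (Nm g *v z))"
  by (simp add: Em_def matrix_vector_mul_assoc)

lemma Dg_mult: "Dg A ** Dg B = Dg (A ** B)"
  unfolding matrix_eq matrix_vector_mul_assoc[symmetric]
  by (intro allI bv_eq) (simp flip: matrix_vector_mul_assoc)

lemma Dg_one: "Dg (mat 1) = mat 1"
  unfolding matrix_eq
  by (intro allI bv_eq) simp

lemma Em_Dg_comm: "Em g s ** Dg M = Dg M ** Em g s"
  unfolding matrix_eq matrix_vector_mul_assoc[symmetric]
  by (intro allI bv_eq) (simp add: Em_mv bv_Nm)

lemma Em_zero: "Em g 0 = mat 1" by (simp add: Em_def)

lemma Amat_eq: "Amat \<omega> g t = Dg (- skew (\<omega> t)) + Nm g"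
  unfolding Amat_def Dg_def Nm_def blk_def
  by (auto simp: vec_eq_iff Ablk_def Nb_def)

lemma transpose_skew: "transpose (skew w) = - skew w"
  by (simp add: vec_eq_iff transpose_def skew_def forall_3 vector_3)

lemma bl_Dg: "bounded_linear (Dg :: real^3^3 \<Rightarrow> real^('a::finite\<times>3)^('a\<times>3))"
  by (rule linear_conv_bounded_linear[THEN iffD1], rule linearI)
     (simp_all add: vec_eq_iff Dg_def blk_def)

lemma bl_transpose: "bounded_linear (transpose :: real^'n::finite^'m::finite \<Rightarrow> real^'m^'n)"
  by (rule linear_conv_bounded_linear[THEN iffD1], rule linearI)
     (simp_all add: vec_eq_iff transpose_def)

lemma mm_lin: fixes A B :: "real^'n::finite^'m::finite" and C D :: "real^'k::finite^'n"
  shows "(A + B) ** C = A ** C + B ** C" "(c *\<^sub>R A) ** C = c *\<^sub>R (A ** C)"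
   "A ** (c *\<^sub>R C) = c *\<^sub>R (A ** C)" "A ** (C + D) = A ** C + A ** D"
  by (simp_all add: vec_eq_iff matrix_matrix_mult_def sum.distrib sum_distrib_left algebra_simps)

lemma bb_mult: "bounded_bilinear ((**) :: real^'n::finite^'m::finite \<Rightarrow> real^'k::finite^'n \<Rightarrow> real^'k^'m)"
  unfolding bilinear_conv_bounded_bilinear[symmetric] bilinear_def
  by (auto intro!: linearI simp: mm_lin)



lemma Em_deriv: "((\<lambda>s. Em g (s - t)) has_vector_derivative (Nm g + (\<tau> - t) *\<^sub>R (Nm g ** Nm g))) (at \<tau> within S)"
proof -
  have "((\<lambda>s. Em g (s - t)) has_vector_derivative
     (0 + ((\<tau> - t) *\<^sub>R 0 + 1 *\<^sub>R Nm g) + (((\<tau> - t)^2/2) *\<^sub>R 0 + (\<tau> - t) *\<^sub>R (Nm g ** Nm g)))) (at \<tau> within S)"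
    unfolding Em_def
    by (intro derivative_eq_intros) (auto simp: power2_eq_square)
  then show ?thesis by simp
qed

lemma deriv_eq:
  "(Em g s ** Dg (transpose (R ** skew w)) + (Nm g + s *\<^sub>R (Nm g ** Nm g)) ** Dg (transpose R)) ** Dg R0
   = (Dg (- skew w) + Nm g) ** (Em g s ** Dg (transpose R) ** Dg R0)"
  unfolding matrix_eq
  apply (intro allI bv_eq)
  apply (simp add: Em_mv bv_Nm matrix_transpose_mul transpose_skew flip: matrix_vector_mul_assoc)
  apply (auto simp: algebra_simps)
  done


definition PhiM :: "(real \<Rightarrow> real^3^3) \<Rightarrow> real^3 \<Rightarrow> real \<Rightarrow> real \<Rightarrow> real^(5\<times>3)^(5\<times>3)" where
  "PhiM R g \<tau> t = Em g (\<tau> - t) ** Dg (transpose (R \<tau>)) ** Dg (R t)"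

lemma SO3_orth: "Q \<in> SO3 \<Longrightarrow> transpose Q ** Q = mat 1"
  by (simp add: SO3_def orthogonal_matrix)

lemma PhiM_deriv:
  assumes RSO: "\<forall>t\<ge>0. R t \<in> SO3"
    and Rd: "\<forall>t\<ge>0. (R has_vector_derivative (R t ** skew (\<omega> t))) (at t within {0..})"
    and t: "0 \<le> t" and tau: "t \<le> \<tau>"
  shows "((\<lambda>s. PhiM R g s t) has_vector_derivative (Amat \<omega> g \<tau> ** PhiM R g \<tau> t)) (at \<tau> within {t..})"
proof -
  have hR: "(R has_vector_derivative (R \<tau> ** skew (\<omega> \<tau>))) (at \<tau> within {t..})"
    by (rule has_vector_derivative_within_subset[OF Rd[rule_format]]) (use t tau in auto)
  have hRT: "((\<lambda>s. Dg (transpose (R s))) has_vector_derivative Dg (transpose (R \<tau> ** skew (\<omega> \<tau>)))) (at \<tau> within {t..})"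
    by (rule bounded_linear.has_vector_derivative[OF bl_Dg,
          OF bounded_linear.has_vector_derivative[OF bl_transpose hR]])
  have hP: "((\<lambda>s. Em g (s - t) ** Dg (transpose (R s))) has_vector_derivative
      (Em g (\<tau> - t) ** Dg (transpose (R \<tau> ** skew (\<omega> \<tau>))) + (Nm g + (\<tau> - t) *\<^sub>R (Nm g ** Nm g)) ** Dg (transpose (R \<tau>)))) (at \<tau> within {t..})"
    by (rule bounded_bilinear.has_vector_derivative[OF bb_mult Em_deriv hRT])
  have hF: "((\<lambda>s. Em g (s - t) ** Dg (transpose (R s)) ** Dg (R t)) has_vector_derivative
      (Em g (\<tau> - t) ** Dg (transpose (R \<tau> ** skew (\<omega> \<tau>))) + (Nm g + (\<tau> - t) *\<^sub>R (Nm g ** Nm g)) ** Dg (transpose (R \<tau>))) ** Dg (R t)) (at \<tau> within {t..})"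
    by (rule bounded_linear.has_vector_derivative[OF bounded_bilinear.bounded_linear_left[OF bb_mult] hP])
  show ?thesis
    using hF unfolding PhiM_def deriv_eq Amat_eq .
qed

lemma PhiM_trans:
  assumes RSO: "\<forall>t\<ge>0. R t \<in> SO3"
    and Rd: "\<forall>t\<ge>0. (R has_vector_derivative (R t ** skew (\<omega> t))) (at t within {0..})"
  shows "is_transition (Amat \<omega> g) (PhiM R g)"
  unfolding is_transition_def
proof (intro allI impI conjI)
  fix t :: real assume t: "0 \<le> t"
  show "PhiM R g t t = mat 1"
    using SO3_orth[of "R t"] RSO t
    by (simp add: PhiM_def Em_zero matrix_mul_assoc Dg_mult Dg_one)
  fix \<tau> :: real assume "t \<le> \<tau>"
  then show "((\<lambda>s. PhiM R g s t) has_vector_derivative Amat \<omega> g \<tau> ** PhiM R g \<tau> t) (at \<tau> within {t..})"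
    by (rule PhiM_deriv[OF RSO Rd t])
qed


lemma indep3:
  fixes a b c g r :: "real^3"
  assumes nc: "\<not> collinear {a, b, c}" and gs: "g \<notin> span {b - a, c - a}"
    and r1: "r \<bullet> (b - a) = 0" and r2: "r \<bullet> (c - a) = 0" and r3: "r \<bullet> g = 0"
  shows "r = 0"
proof (rule ccontr)
  assume r0: "r \<noteq> 0"
  define u where "u = b - a"
  define v where "v = c - a"
  have "collinear {a, b, c} = collinear {b, a, c}" by (simp add: insert_commute)
  also have "\<dots> = collinear {0, u, v}" unfolding u_def v_def
    by (auto simp: collinear_def)
  finally have nc2: "\<not> collinear {0, u, v}" using nc by simp
  then have u0: "u \<noteq> 0" and v0: "v \<noteq> 0" and nk: "\<And>k. v \<noteq> k *\<^sub>R u"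
    unfolding collinear_lemma by auto
  have uv: "u \<notin> span {v}"
  proof
    assume "u \<in> span {v}"
    then obtain k where "u = k *\<^sub>R v" by (auto simp: span_singleton)
    with u0 have "k \<noteq> 0" by auto
    with \<open>u = k *\<^sub>R v\<close> have "v = (1/k) *\<^sub>R u" by simp
    with nk show False by blast
  qed
  have iuv: "independent {u, v}"
    using uv v0 by (simp add: independent_insert)
  have guv: "g \<notin> span {u, v}" using gs unfolding u_def v_def .
  have ind: "independent {g, u, v}"
    using guv iuv by (rule independent_insertI)
  have neq: "g \<noteq> u" "g \<noteq> v" "u \<noteq> v"
    using guv nk[of 1] by (auto intro: span_base)
  have card: "card {g, u, v} = 3" using neq by auto
  have sub: "{g, u, v} \<subseteq> {x. r \<bullet> x = 0}" using r1 r2 r3 unfolding u_def v_def by auto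
  have "card {g, u, v} \<le> dim {x. r \<bullet> x = 0}"
    by (rule independent_card_le_dim[OF sub ind])
  also have "\<dots> = 2" using dim_hyperplane[OF r0] by simp
  finally show False using card by simp
qed


definition lin :: "real^3 \<Rightarrow> real^(5\<times>3) \<Rightarrow> real^3" where
  "lin l w = bv w 1 - l$1 *\<^sub>R bv w 2 - l$2 *\<^sub>R bv w 3 - l$3 *\<^sub>R bv w 4"

lemma lin_simps[simp]: "lin l (Dg M *v w) = M *v lin l w" "lin l (Nm g *v w) = bv w 5"
  "lin l (z + w) = lin l z + lin l w" "lin l (c *\<^sub>R w) = c *\<^sub>R lin l w"
  by (simp_all add: lin_def algebra_simps)

lemma Cblk_eq: "Cblk P l b = (if b = 1 then 1 else if b = 2 then - l$1 else if b = 3 then - l$2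
     else if b = 4 then - l$3 else 0) *\<^sub>R P"
  by (simp add: Cblk_def)

lemma Cmat_blk: "Cmat P pl \<tau> = blk (\<lambda>i b. Cblk (P i \<tau>) (pl i) b)"
  by (simp add: Cmat_def blk_def)

lemma bv_Cmat: "bv (Cmat P pl \<tau> *v w) i = P i \<tau> *v lin (pl i) w"
  unfolding Cmat_blk bv_blk sum5 lin_def Cblk_def
  by (simp add: algebra_simps)

definition Km :: "('n::finite \<Rightarrow> real^3) \<Rightarrow> real^(5\<times>3)^('n\<times>3)" where
  "Km pl = blk (\<lambda>i b. Cblk (mat 1) (pl i) b)"

lemma bv_Km: "bv (Km pl *v w) i = lin (pl i) w"
  unfolding Km_def bv_blk sum5 lin_def Cblk_def
  by (simp add: algebra_simps)

definition Lm :: "real^3 \<Rightarrow> ('n::finite \<Rightarrow> real^3) \<Rightarrow> real \<Rightarrow> real^(5\<times>3)^('n\<times>3)" where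
  "Lm g pl s = Km pl ** Em g s"

lemma bv_Lm: "bv (Lm g pl s *v y) i = lin (pl i) y + s *\<^sub>R bv y 5 + (s^2/2) *\<^sub>R Gs g y"
  by (simp add: Lm_def bv_Km Em_mv flip: matrix_vector_mul_assoc)

lemma bv_C_Phi: "bv ((Cmat P pl \<tau> ** PhiM R g \<tau> t) *v x) i
   = P i \<tau> *v (transpose (R \<tau>) *v bv (Lm g pl (\<tau> - t) *v (Dg (R t) *v x)) i)"
  unfolding PhiM_def Em_Dg_comm
  by (simp add: bv_Cmat bv_Lm Em_mv flip: matrix_vector_mul_assoc)

lemma Lm_zero:
  fixes pl :: "'n::finite \<Rightarrow> real^3"
  assumes nc: "\<not> collinear {pl i, pl j, pl k}" and gs: "g \<notin> span {pl j - pl i, pl k - pl i}"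
    and z: "\<And>s. s \<in> {0, 1/2, 1} \<Longrightarrow> Lm g pl s *v y = 0"
  shows "y = 0"
proof -
  have bz: "lin (pl i') y + s *\<^sub>R bv y 5 + (s^2/2) *\<^sub>R Gs g y = 0" if "s \<in> {0, 1/2, 1}" for i' s
    using z[OF that] by (metis bv_Lm bv_simps(5))
  have l0: "lin (pl i') y = 0" for i' using bz[of 0 i'] by simp
  have e1: "bv y 5 + (1/2) *\<^sub>R Gs g y = 0" using bz[of 1 i] l0[of i] by simp
  have e2: "(1/2) *\<^sub>R bv y 5 + (1/8) *\<^sub>R Gs g y = 0" using bz[of "1/2" i] l0[of i] by (simp add: power2_eq_square)
  have y5: "bv y 5 = 0" and G0: "Gs g y = 0"
  proof -
    have "\<forall>m. bv y 5 $ m = 0 \<and> Gs g y $ m = 0"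
    proof
      fix m
      have "bv y 5 $ m + (1/2) * Gs g y $ m = 0" using arg_cong[OF e1, of "\<lambda>v. v $ m"] by simp
      moreover have "(1/2) * bv y 5 $ m + (1/8) * Gs g y $ m = 0" using arg_cong[OF e2, of "\<lambda>v. v $ m"] by simp
      ultimately show "bv y 5 $ m = 0 \<and> Gs g y $ m = 0" by linarith
    qed
    then show "bv y 5 = 0" "Gs g y = 0" by (simp_all add: vec_eq_iff)
  qed
  have comp: "bv y 1 $ m = 0 \<and> bv y 2 $ m = 0 \<and> bv y 3 $ m = 0 \<and> bv y 4 $ m = 0" for m
  proof -
    define r :: "real^3" where "r = vector [bv y 2 $ m, bv y 3 $ m, bv y 4 $ m]"
    have lr: "lin l y $ m = bv y 1 $ m - r \<bullet> l" for l
      by (simp add: lin_def r_def inner_vec_def sum_3 algebra_simps)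
    have gr: "r \<bullet> g = 0"
      using arg_cong[OF G0, of "\<lambda>v. v $ m"] by (simp add: Gs_def r_def inner_vec_def sum_3 algebra_simps)
    have "r \<bullet> (pl j - pl i) = 0" using lr[of "pl i"] lr[of "pl j"] l0[of i] l0[of j]
      by (simp add: inner_diff_right)
    moreover have "r \<bullet> (pl k - pl i) = 0" using lr[of "pl i"] lr[of "pl k"] l0[of i] l0[of k]
      by (simp add: inner_diff_right)
    ultimately have "r = 0" using indep3[OF nc gs] gr by blast
    then have "r $ 1 = 0" "r $ 2 = 0" "r $ 3 = 0" by simp_all
    then have "bv y 2 $ m = 0 \<and> bv y 3 $ m = 0 \<and> bv y 4 $ m = 0"
      unfolding r_def by (simp add: vector_3)
    moreover have "bv y 1 $ m = 0" using lr[of "pl i"] l0[of i] \<open>r = 0\<close> by simp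
    ultimately show ?thesis by simp
  qed
  show "y = 0"
    apply (rule bv_eq)
    subgoal for a using comp y5 all5[of "\<lambda>a. bv y a = 0 "]
      by (simp add: vec_eq_iff)
    done
qed


lemma inner_mv: "(A *v x) \<bullet> y = x \<bullet> (transpose A *v (y::real^_))"
  by (metis dot_lmul_matrix inner_commute transpose_matrix_vector)

lemma norm_orth: assumes "orthogonal_matrix Q" shows "norm (Q *v v) = norm (v::real^'n::finite)"
proof -
  have "(Q *v v) \<bullet> (Q *v v) = v \<bullet> v"
    using assms by (simp add: inner_mv matrix_vector_mul_assoc orthogonal_matrix)
  then show ?thesis by (simp add: norm_eq_sqrt_inner)
qed

lemma SO3_orthm: "Q \<in> SO3 \<Longrightarrow> orthogonal_matrix Q" by (simp add: SO3_def)

lemma norm_Dg: assumes "orthogonal_matrix Q" shows "norm (Dg Q *v (x::real^('a::finite\<times>3))) = norm x"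
proof -
  have "(Dg Q *v x) \<bullet> (Dg Q *v x) = x \<bullet> x"
    unfolding inner_bv[of "Dg Q *v x"] inner_bv[of x]
    using norm_orth[OF assms] by (simp add: dot_square_norm)
  then show ?thesis by (simp add: norm_eq_sqrt_inner)
qed

lemma norm_sq_bv: "norm z ^ 2 = (\<Sum>a\<in>UNIV. norm (bv z a) ^ 2)"
  by (simp add: power2_norm_eq_inner inner_bv)

lemma Pi_bound:
  assumes e: "\<forall>x. e * (x \<bullet> x) \<le> x \<bullet> (P *v x)" and e0: "0 < e"
  shows "e^2 * norm v ^ 2 \<le> norm (P *v v) ^ 2"
proof -
  have "e * norm v ^ 2 \<le> v \<bullet> (P *v v)" using e by (simp add: power2_norm_eq_inner)
  also have "\<dots> \<le> norm v * norm (P *v v)" by (rule norm_cauchy_schwarz)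
  finally have h: "e * norm v ^ 2 \<le> norm v * norm (P *v v)" .
  have "e * norm v \<le> norm (P *v v)"
  proof (cases "v = 0")
    case False
    then have "norm v > 0" by simp
    with h show ?thesis by (simp add: power2_eq_square)
  qed simp
  then have "(e * norm v)^2 \<le> norm (P *v v) ^ 2"
    using e0 by (intro power_mono) auto
  then show ?thesis by (simp add: power_mult_distrib)
qed

lemma quad_integral:
  fixes F :: "real \<Rightarrow> real^'n::finite^'m::finite"
  assumes "continuous_on {a..b} F"
  shows "x \<bullet> (integral {a..b} (\<lambda>\<tau>. transpose (F \<tau>) ** F \<tau>) *v x) = integral {a..b} (\<lambda>\<tau>. norm (F \<tau> *v x)^2)"
proof -
  have c: "continuous_on {a..b} (\<lambda>\<tau>. transpose (F \<tau>) ** F \<tau>)"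
    by (intro bounded_bilinear.continuous_on[OF bb_mult] bounded_linear.continuous_on[OF bl_transpose] assms)
  have bl: "bounded_linear (\<lambda>M::real^'n^'n. x \<bullet> (M *v x))"
    by (rule linear_conv_bounded_linear[THEN iffD1], rule linearI) (simp_all add: inner_add_right)
  have "integral {a..b} ((\<lambda>M. x \<bullet> (M *v x)) \<circ> (\<lambda>\<tau>. transpose (F \<tau>) ** F \<tau>))
     = x \<bullet> (integral {a..b} (\<lambda>\<tau>. transpose (F \<tau>) ** F \<tau>) *v x)"
    by (rule integral_linear[OF integrable_continuous_interval[OF c] bl])
  moreover have "((\<lambda>M. x \<bullet> (M *v x)) \<circ> (\<lambda>\<tau>. transpose (F \<tau>) ** F \<tau>)) = (\<lambda>\<tau>. norm (F \<tau> *v x)^2)"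
    by (rule ext) (simp add: power2_norm_eq_inner inner_mv[of "F _" x] matrix_vector_mul_assoc inner_commute)
  ultimately show ?thesis by simp
qed


lemma Em_cont: "continuous_on S (Em g)"
  unfolding Em_def by (intro continuous_intros) auto

lemma bl_mv_left: "bounded_linear (\<lambda>M::real^'n::finite^'m::finite. M *v y)"
  by (rule linear_conv_bounded_linear[THEN iffD1], rule linearI) simp_all

lemma Lm_cont: "continuous_on S (Lm g pl)"
  unfolding Lm_def by (intro bounded_bilinear.continuous_on[OF bb_mult] continuous_on_const Em_cont)


lemma Lm_pos:
  fixes pl :: "'n::finite \<Rightarrow> real^3"
  assumes nc: "\<not> collinear {pl i, pl j, pl k}" and gs: "g \<notin> span {pl j - pl i, pl k - pl i}"
  shows "\<exists>m>0. \<forall>y. m * (y \<bullet> y) \<le> integral {0..1} (\<lambda>s. norm (Lm g pl s *v y)^2)"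
proof -
  define Mq where "Mq = integral {0..1} (\<lambda>s. transpose (Lm g pl s) ** Lm g pl s)"
  define q where "q y = integral {0..1} (\<lambda>s. norm (Lm g pl s *v y)^2)" for y
  have qM: "q y = y \<bullet> (Mq *v y)" for y
    unfolding q_def Mq_def by (rule quad_integral[symmetric], rule Lm_cont)
  have c1: "continuous_on (sphere 0 1) (\<lambda>y. Mq *v y)"
    by (rule bounded_linear.continuous_on[OF matrix_vector_mul_bounded_linear continuous_on_id])
  have cq: "continuous_on (sphere 0 1) q"
    unfolding qM by (rule continuous_on_inner[OF continuous_on_id c1])
  obtain y0 where y0: "y0 \<in> sphere 0 1" and ymin: "\<And>y. y \<in> sphere 0 1 \<Longrightarrow> q y0 \<le> q y"
    using continuous_attains_inf[OF compact_sphere _ cq] by auto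
  have fc: "continuous_on {0..1} (\<lambda>s. norm (Lm g pl s *v y)^2)" for y
    by (intro continuous_on_power continuous_on_norm bounded_linear.continuous_on[OF bl_mv_left] Lm_cont)
  have qnn: "0 \<le> q y" for y
    unfolding q_def by (rule integral_nonneg[OF integrable_continuous_interval[OF fc]]) simp
  have qpos: "0 < q y0"
  proof (rule ccontr)
    assume "\<not> 0 < q y0"
    then have q0: "q y0 = 0" using qnn[of y0] by simp
    have hi: "((\<lambda>s. norm (Lm g pl s *v y0)^2) has_integral 0) {0..1}"
      using integrable_integral[OF integrable_continuous_interval[OF fc[of y0]]] q0
      unfolding q_def by simp
    have "Lm g pl s *v y0 = 0" if "s \<in> {0, 1/2, 1}" for s
    proof -
      have "(\<lambda>s. norm (Lm g pl s *v y0)^2) s = 0"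
        by (rule has_integral_0_cbox_imp_0[where a=0 and b=1]) (use fc[of y0] that hi in auto)
      then show ?thesis by simp
    qed
    then have "y0 = 0" by (rule Lm_zero[OF nc gs])
    then show False using y0 by simp
  qed
  have "q y0 * (y \<bullet> y) \<le> q y" for y
  proof (cases "y = 0")
    case True then show ?thesis by (simp add: q_def)
  next
    case False
    define w where "w = (1 / norm y) *\<^sub>R y"
    have w: "w \<in> sphere 0 1" using False by (simp add: w_def)
    have yw: "y = norm y *\<^sub>R w" using False by (simp add: w_def)
    have "q y = (norm y)^2 * q w"
      by (subst yw, simp add: qM power2_eq_square)
    moreover have "y \<bullet> y = (norm y)^2" by (simp add: power2_norm_eq_inner)
    ultimately show ?thesis using ymin[OF w] by (simp add: mult.commute mult_right_mono)
  qed
  then show ?thesis using qpos unfolding q_def by blast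
qed



lemma Cmat_cont: assumes "\<forall>i. continuous_on S (P i)" shows "continuous_on S (Cmat P pl)"
  unfolding Cmat_def Cblk_eq
  by (intro continuous_on_vec_lambda continuous_on_component continuous_on_scaleR continuous_on_const assms[rule_format])

lemma PhiM_cont:
  assumes RSO: "\<forall>t\<ge>0. R t \<in> SO3"
    and Rd: "\<forall>t\<ge>0. (R has_vector_derivative (R t ** skew (\<omega> t))) (at t within {0..})"
    and t: "0 \<le> t"
  shows "continuous_on {t..} (\<lambda>s. PhiM R g s t)"
  unfolding continuous_on_eq_continuous_within
  using has_vector_derivative_continuous[OF PhiM_deriv[OF RSO Rd t]] by auto

lemma Lm_cont': "continuous_on S f \<Longrightarrow> continuous_on S (\<lambda>\<tau>. Lm g pl (f \<tau>))"
  using continuous_on_compose[of S f "Lm g pl"] Lm_cont[of "f ` S" g pl] by (simp add: o_def)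

theorem lemma2:
  fixes R :: "real \<Rightarrow> real^3^3" and \<omega> p :: "real \<Rightarrow> real^3" and g :: "real^3"
    and pl :: "'n::finite \<Rightarrow> real^3"
    and Rc1 Rc2 :: "real^3^3" and pc1 pc2 :: "real^3"
  assumes "\<forall>t\<ge>0. R t \<in> SO3"
    and "\<forall>t\<ge>0. (R has_vector_derivative (R t ** skew (\<omega> t))) (at t within {0..})"
    and "continuous_on {0..} \<omega>" and "bounded (\<omega> ` {0..})"
    and "g \<noteq> 0"
    and "CARD('n) \<ge> 3"
    and "Rc1 \<in> SO3" and "Rc2 \<in> SO3"
    and "\<forall>i. continuous_on {0..} (PiM R p Rc1 pc1 Rc2 pc2 (pl i))"
    and "\<forall>i. bounded (PiM R p Rc1 pc1 Rc2 pc2 (pl i) ` {0..})"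
    and "\<forall>i. \<exists>\<epsilon>>0. \<forall>t\<ge>0. \<forall>x. x \<bullet> (PiM R p Rc1 pc1 Rc2 pc2 (pl i) t *v x) \<ge> \<epsilon> * (x \<bullet> x)"
    and "\<exists>i j k. \<not> collinear {pl i, pl j, pl k} \<and> g \<notin> span {pl j - pl i, pl k - pl i}"
  shows "uniformly_observable (Amat \<omega> g) (Cmat (\<lambda>i. PiM R p Rc1 pc1 Rc2 pc2 (pl i)) pl)"
proof -
  note RSO = assms(1) and Rd = assms(2)
  define P where "P = (\<lambda>i. PiM R p Rc1 pc1 Rc2 pc2 (pl i))"
  obtain i j k where nc: "\<not> collinear {pl i, pl j, pl k}" and gs: "g \<notin> span {pl j - pl i, pl k - pl i}"
    using assms(12) by blast
  obtain m where m0: "m > 0" and mq: "\<And>y. m * (y \<bullet> y) \<le> integral {0..1} (\<lambda>s. norm (Lm g pl s *v y)^2)"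
    using Lm_pos[OF nc gs] by blast
  obtain e where e: "\<And>i. e i > 0 \<and> (\<forall>t\<ge>0. \<forall>x. x \<bullet> (P i t *v x) \<ge> e i * (x \<bullet> x))"
    using assms(11) unfolding P_def by metis
  define \<epsilon> where "\<epsilon> = Min (range e)"
  have \<epsilon>0: "\<epsilon> > 0" unfolding \<epsilon>_def using e by (simp add: Min_gr_iff)
  have \<epsilon>le: "\<epsilon> \<le> e i'" for i' unfolding \<epsilon>_def by simp
  have Pc: "\<forall>i. continuous_on {0..} (P i)" using assms(9) unfolding P_def by blast
  show ?thesis
    unfolding uniformly_observable_def P_def[symmetric]
  proof (intro exI conjI allI impI)
    show "is_transition (Amat \<omega> g) (PhiM R g)" by (rule PhiM_trans[OF RSO Rd])
    show "(0::real) < 1" by simp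
    show "0 < \<epsilon>^2 * m" using \<epsilon>0 m0 by simp
    fix t :: real and x :: "real^(5\<times>3)"
    assume t: "0 \<le> t"
    define F where "F \<tau> = Cmat P pl \<tau> ** PhiM R g \<tau> t" for \<tau>
    define y where "y = Dg (R t) *v x"
    have ny: "norm y = norm x" unfolding y_def
      by (rule norm_Dg) (use RSO t SO3_orthm in auto)
    have Fc: "continuous_on {t..t+1} F"
      unfolding F_def
      by (intro bounded_bilinear.continuous_on[OF bb_mult]
          continuous_on_subset[OF Cmat_cont[OF Pc]] continuous_on_subset[OF PhiM_cont[OF RSO Rd t]])
        (use t in auto)
    have c1: "continuous_on {t..t+1} (\<lambda>\<tau>. norm (F \<tau> *v x)^2)"
      by (intro continuous_on_power continuous_on_norm bounded_linear.continuous_on[OF bl_mv_left] Fc)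
    have c2: "continuous_on {t..t+1} (\<lambda>\<tau>. \<epsilon>^2 * norm (Lm g pl (\<tau> - t) *v y)^2)"
      by (intro continuous_on_mult continuous_on_const continuous_on_power continuous_on_norm
          bounded_linear.continuous_on[OF bl_mv_left] Lm_cont' continuous_on_diff continuous_on_id)
    have pw: "\<epsilon>^2 * norm (Lm g pl (\<tau> - t) *v y)^2 \<le> norm (F \<tau> *v x)^2" if "\<tau> \<in> {t..t+1}" for \<tau>
    proof -
      have \<tau>0: "0 \<le> \<tau>" using that t by auto
      have oT: "orthogonal_matrix (transpose (R \<tau>))" using RSO \<tau>0 SO3_orthm by auto
      have "\<epsilon>^2 * norm (Lm g pl (\<tau> - t) *v y)^2
          = (\<Sum>a\<in>UNIV. \<epsilon>^2 * norm (transpose (R \<tau>) *v bv (Lm g pl (\<tau> - t) *v y) a)^2)"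
        by (simp add: norm_sq_bv sum_distrib_left norm_orth[OF oT] del: transpose_matrix_vector)
      also have "\<dots> \<le> (\<Sum>a\<in>UNIV. norm (bv (F \<tau> *v x) a)^2)"
      proof (rule sum_mono)
        fix a
        let ?v = "transpose (R \<tau>) *v bv (Lm g pl (\<tau> - t) *v y) a"
        have "\<epsilon>^2 * norm ?v^2 \<le> e a ^2 * norm ?v^2"
          using \<epsilon>le[of a] \<epsilon>0 by (intro mult_right_mono power_mono) auto
        also have "\<dots> \<le> norm (P a \<tau> *v ?v)^2"
          by (rule Pi_bound) (use e[of a] \<tau>0 in auto)
        finally show "\<epsilon>^2 * norm ?v^2 \<le> norm (bv (F \<tau> *v x) a)^2"
          unfolding F_def bv_C_Phi y_def .
      qed
      also have "\<dots> = norm (F \<tau> *v x)^2" by (simp add: norm_sq_bv)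
      finally show ?thesis .
    qed
    have "\<epsilon>^2 * m * (x \<bullet> x) = \<epsilon>^2 * (m * (y \<bullet> y))"
      using ny by (simp add: power2_norm_eq_inner[symmetric])
    also have "\<dots> \<le> \<epsilon>^2 * integral {0..1} (\<lambda>s. norm (Lm g pl s *v y)^2)"
      using mq[of y] by (simp add: mult_left_mono)
    also have "\<dots> = \<epsilon>^2 * integral {t..t+1} (\<lambda>\<tau>. norm (Lm g pl (\<tau> - t) *v y)^2)"
      using integral_shift_Icc_real[of 0 1 "\<lambda>\<tau>. norm (Lm g pl (\<tau> - t) *v y)^2" t]
      by (simp add: o_def add.commute)
    also have "\<dots> = integral {t..t+1} (\<lambda>\<tau>. \<epsilon>^2 * norm (Lm g pl (\<tau> - t) *v y)^2)"
      using integral_mult[OF integrable_continuous_interval[OF c2], of "1/\<epsilon>^2"] \<epsilon>0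
      by simp
    also have "\<dots> \<le> integral {t..t+1} (\<lambda>\<tau>. norm (F \<tau> *v x)^2)"
      by (rule integral_le[OF integrable_continuous_interval[OF c2] integrable_continuous_interval[OF c1] pw])
    also have "\<dots> = x \<bullet> (integral {t..t+1} (\<lambda>\<tau>. transpose (F \<tau>) ** F \<tau>) *v x)"
      by (rule quad_integral[symmetric, OF Fc])
    finally show "\<epsilon>^2 * m * (x \<bullet> x) \<le> x \<bullet> (((1/1) *\<^sub>R integral {t..t+1}
        (\<lambda>\<tau>. transpose (Cmat P pl \<tau> ** PhiM R g \<tau> t) ** (Cmat P pl \<tau> ** PhiM R g \<tau> t))) *v x)"
      unfolding F_def by simp
  qed
qed

end
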